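(* For all $n\ge1$, $$a_{\{0102,0112,0120\}}(n)=a_{\{0102,0112,0121\}}(n)=a_{\{0112,0120,0121\}}(n)=2^{n-1}+\binom{n}{3}.$$
   Context: An ascent in an integer sequence $s_1\cdots s_m$ is an index $j$ with $s_j<s_{j+1}$; $\mathrm{asc}$ denotes the number of ascents. An ascent sequence is a sequence $x_1\cdots x_n$ of nonnegative integers with $x_1=0$ and $x_i\le 1+\mathrm{asc}(x_1\cdots x_{i-1})$ for all $i\ge2$. The reduction $\mathrm{red}(w)$ of an integer sequence $w$ replaces the $i$-th smallest distinct letter of $w$ by $i-1$; a pattern is a reduced sequence. A sequence $x$ contains a pattern $p=p_1\cdots p_k$ if there are indices $i_1<\cdots<i_k$ with $\mathrm{red}(x_{i_1}\cdots x_{i_k})=p$; otherwise $x$ avoids $p$. For a finite set $P$ of patterns, $a_P(n)$ denotes the number of ascent sequences of length $n$ avoiding every pattern in $P$. *)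

theory Defs
  imports Main
begin

definition asc :: "nat list \<Rightarrow> nat" where
  "asc s = card {j. Suc j < length s \<and> s ! j < s ! Suc j}"

(* ascent sequence: x_1 = 0 and x_i \<le> 1 + asc(x_1 ... x_{i-1}) for i \<ge> 2 (0-indexed below) *)
definition ascent_seq :: "nat list \<Rightarrow> bool" where
  "ascent_seq x \<longleftrightarrow> x \<noteq> [] \<and> x ! 0 = 0 \<and>
     (\<forall>i. 0 < i \<and> i < length x \<longrightarrow> x ! i \<le> 1 + asc (take i x))"

(* reduction: the i-th smallest distinct letter becomes i-1 *)
definition red :: "nat list \<Rightarrow> nat list" where
  "red w = map (\<lambda>a. card {b \<in> set w. b < a}) w"

definition contains :: "nat list \<Rightarrow> nat list \<Rightarrow> bool" where
  "contains x p \<longleftrightarrow> (\<exists>s \<in> set (subseqs x). red s = p)"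

definition avoids :: "nat list \<Rightarrow> nat list \<Rightarrow> bool" where
  "avoids x p \<longleftrightarrow> \<not> contains x p"

definition a_count :: "nat list set \<Rightarrow> nat \<Rightarrow> nat" where
  "a_count P n = card {x. length x = n \<and> ascent_seq x \<and> (\<forall>p \<in> P. avoids x p)}"

end

theory Submission
  imports Defs "HOL-Library.Sublist"
begin


lemma subseq_idx:
  assumes "subseq s x"
  shows "\<exists>idx. sorted_wrt (<) idx \<and> (\<forall>i\<in>set idx. i < length x) \<and> s = map (nth x) idx"
  using assms
proof (induction rule: list_emb.induct)
  case (list_emb_Nil ys)
  then show ?case by (intro exI[of _ "[]"]) auto
next
  case (list_emb_Cons xs ys y)
  then obtain idx where "sorted_wrt (<) idx" "\<forall>i\<in>set idx. i < length ys" "xs = map (nth ys) idx" by blast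
  then show ?case
    by (intro exI[of _ "map Suc idx"]) (auto simp: sorted_wrt_map)
next
  case (list_emb_Cons2 x y xs ys)
  then obtain idx where "sorted_wrt (<) idx" "\<forall>i\<in>set idx. i < length ys" "xs = map (nth ys) idx" by blast
  then show ?case
    using list_emb_Cons2.hyps by (intro exI[of _ "0 # map Suc idx"]) (auto simp: sorted_wrt_map)
qed

lemma idx_subseq:
  assumes "sorted_wrt (<) idx" "\<forall>i\<in>set idx. i < length x"
  shows "subseq (map (nth x) idx) x"
proof -
  have "subseq idx [0..<length x]"
    by (rule sorted_subset_imp_subseq) (use assms in auto)
  then have "subseq (map (nth x) idx) (map (nth x) [0..<length x])" by (rule subseq_map)
  then show ?thesis by (simp add: map_nth)
qed

lemma length_red[simp]: "length (red s) = length s"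
  by (simp add: red_def)

lemma red_nth: "i < length s \<Longrightarrow> red s ! i = card {b \<in> set s. b < s ! i}"
  by (simp add: red_def)

lemma red_less:
  assumes "i < length s" "j < length s"
  shows "red s ! i < red s ! j \<longleftrightarrow> s ! i < s ! j"
proof
  assume h: "s ! i < s ! j"
  have sub: "{b \<in> set s. b < s ! i} \<subseteq> {b \<in> set s. b < s ! j}"
    using h by (auto intro: less_trans)
  have m: "s ! i \<in> {b \<in> set s. b < s ! j}" using h assms(1) by simp
  have nm: "s ! i \<notin> {b \<in> set s. b < s ! i}" by simp
  have "{b \<in> set s. b < s ! i} \<subset> {b \<in> set s. b < s ! j}"
    using sub m nm by blast
  then have "card {b \<in> set s. b < s ! i} < card {b \<in> set s. b < s ! j}"
    by (rule psubset_card_mono[rotated]) simp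
  then show "red s ! i < red s ! j" using assms by (simp add: red_nth)
next
  assume h: "red s ! i < red s ! j"
  show "s ! i < s ! j"
  proof (rule ccontr)
    assume "\<not> s ! i < s ! j"
    then have "{b \<in> set s. b < s ! j} \<subseteq> {b \<in> set s. b < s ! i}" by auto
    then have "card {b \<in> set s. b < s ! j} \<le> card {b \<in> set s. b < s ! i}"
      by (rule card_mono[rotated]) simp
    then have "red s ! j \<le> red s ! i" using assms by (simp add: red_nth)
    then show False using h by simp
  qed
qed

lemma red_eq:
  assumes "i < length s" "j < length s"
  shows "red s ! i = red s ! j \<longleftrightarrow> s ! i = s ! j"
  using red_less[OF assms] red_less[OF assms(2,1)]
  by (cases "s ! i < s ! j"; cases "s ! j < s ! i"; auto)

lemma contains4:
  assumes "length p = 4"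
  shows "contains x p \<longleftrightarrow> (\<exists>i j k l. i<j \<and> j<k \<and> k<l \<and> l<length x \<and> red [x!i,x!j,x!k,x!l] = p)"
proof
  assume "contains x p"
  then obtain s where s: "subseq s x" "red s = p" unfolding contains_def by auto
  then have ls: "length s = 4" using assms length_red by metis
  obtain idx where idx: "sorted_wrt (<) idx" "\<forall>i\<in>set idx. i < length x" "s = map (nth x) idx"
    using subseq_idx[OF s(1)] by blast
  then have "length idx = 4" using ls by simp
  then obtain i j k l where "idx = [i,j,k,l]"
    by (auto simp: numeral_eq_Suc length_Suc_conv)
  then show "\<exists>i j k l. i<j \<and> j<k \<and> k<l \<and> l<length x \<and> red [x!i,x!j,x!k,x!l] = p"
    using idx s by auto
next
  assume "\<exists>i j k l. i<j \<and> j<k \<and> k<l \<and> l<length x \<and> red [x!i,x!j,x!k,x!l] = p"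
  then obtain i j k l where h: "i<j" "j<k" "k<l" "l<length x" "red [x!i,x!j,x!k,x!l] = p" by blast
  have "subseq (map (nth x) [i,j,k,l]) x" by (rule idx_subseq) (use h in auto)
  then show "contains x p" using h unfolding contains_def by auto
qed

lemma red4_0102: "red [a,b,c,d] = [0,1,0,2] \<longleftrightarrow> (a = c \<and> a < b \<and> b < (d::nat))"
proof
  assume h: "red [a,b,c,d] = [0,1,0,2]"
  have "a = c" using red_eq[of 0 "[a,b,c,d]" 2] h by simp
  moreover have "a < b" using red_less[of 0 "[a,b,c,d]" 1] h by simp
  moreover have "b < d" using red_less[of 1 "[a,b,c,d]" 3] h by simp
  ultimately show "a = c \<and> a < b \<and> b < d" by blast
next
  assume h: "a = c \<and> a < b \<and> b < d"
  then have "{y \<in> {a,b,c,d}. y < a} = {}" "{y \<in> {a,b,c,d}. y < b} = {a}" "{y \<in> {a,b,c,d}. y < d} = {a,b}"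
    by auto
  then show "red [a,b,c,d] = [0,1,0,2]" using h by (simp add: red_def)
qed

lemma red4_0112: "red [a,b,c,d] = [0,1,1,2] \<longleftrightarrow> (a < b \<and> b = c \<and> c < (d::nat))"
proof
  assume h: "red [a,b,c,d] = [0,1,1,2]"
  have "b = c" using red_eq[of 1 "[a,b,c,d]" 2] h by simp
  moreover have "a < b" using red_less[of 0 "[a,b,c,d]" 1] h by simp
  moreover have "c < d" using red_less[of 2 "[a,b,c,d]" 3] h by simp
  ultimately show "a < b \<and> b = c \<and> c < d" by blast
next
  assume h: "a < b \<and> b = c \<and> c < d"
  then have "{y \<in> {a,b,c,d}. y < a} = {}" "{y \<in> {a,b,c,d}. y < b} = {a}" "{y \<in> {a,b,c,d}. y < d} = {a,b}"
    by auto
  then show "red [a,b,c,d] = [0,1,1,2]" using h by (simp add: red_def)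
qed

lemma red4_0120: "red [a,b,c,d] = [0,1,2,0] \<longleftrightarrow> (a = d \<and> a < b \<and> b < (c::nat))"
proof
  assume h: "red [a,b,c,d] = [0,1,2,0]"
  have "a = d" using red_eq[of 0 "[a,b,c,d]" 3] h by simp
  moreover have "a < b" using red_less[of 0 "[a,b,c,d]" 1] h by simp
  moreover have "b < c" using red_less[of 1 "[a,b,c,d]" 2] h by simp
  ultimately show "a = d \<and> a < b \<and> b < c" by blast
next
  assume h: "a = d \<and> a < b \<and> b < c"
  then have "{y \<in> {a,b,c,d}. y < a} = {}" "{y \<in> {a,b,c,d}. y < b} = {a}" "{y \<in> {a,b,c,d}. y < c} = {a,b}"
    by auto
  then show "red [a,b,c,d] = [0,1,2,0]" using h by (simp add: red_def)
qed

lemma red4_0121: "red [a,b,c,d] = [0,1,2,1] \<longleftrightarrow> (a < b \<and> b = d \<and> b < (c::nat))"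
proof
  assume h: "red [a,b,c,d] = [0,1,2,1]"
  have "b = d" using red_eq[of 1 "[a,b,c,d]" 3] h by simp
  moreover have "a < b" using red_less[of 0 "[a,b,c,d]" 1] h by simp
  moreover have "b < c" using red_less[of 1 "[a,b,c,d]" 2] h by simp
  ultimately show "a < b \<and> b = d \<and> b < c" by blast
next
  assume h: "a < b \<and> b = d \<and> b < c"
  then have "{y \<in> {a,b,c,d}. y < a} = {}" "{y \<in> {a,b,c,d}. y < b} = {a}" "{y \<in> {a,b,c,d}. y < c} = {a,b}"
    by auto
  then show "red [a,b,c,d] = [0,1,2,1]" using h by (simp add: red_def)
qed



lemma red4_Suc:
  "red [a,b,c,d] = [0,Suc 0,0,2] \<longleftrightarrow> (a = c \<and> a < b \<and> b < (d::nat))"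
  "red [a,b,c,d] = [0,Suc 0,Suc 0,2] \<longleftrightarrow> (a < b \<and> b = c \<and> c < (d::nat))"
  "red [a,b,c,d] = [0,Suc 0,2,0] \<longleftrightarrow> (a = d \<and> a < b \<and> b < (c::nat))"
  "red [a,b,c,d] = [0,Suc 0,2,Suc 0] \<longleftrightarrow> (a < b \<and> b = d \<and> b < (c::nat))"
  using red4_0102[of a b c d] red4_0112[of a b c d] red4_0120[of a b c d] red4_0121[of a b c d] by simp_all


lemma asc_le:
  assumes "finite A" "\<And>j. Suc j < length x \<Longrightarrow> x!j < x!Suc j \<Longrightarrow> j \<in> A"
  shows "asc x \<le> card A"
  unfolding asc_def using assms by (intro card_mono) auto

lemma asc_take_ge:
  assumes "finite A" "\<And>j. j \<in> A \<Longrightarrow> Suc j < i \<and> x!j < x!Suc j" "i \<le> length x"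
  shows "card A \<le> asc (take i x)"
proof -
  have "asc (take i x) = card {j. Suc j < i \<and> x!j < x!Suc j}"
    unfolding asc_def using assms(3) by (intro arg_cong[where f=card]) auto
  moreover have "A \<subseteq> {j. Suc j < i \<and> x!j < x!Suc j}" using assms(2) by auto
  moreover have "finite {j. Suc j < i \<and> x!j < x!Suc j}"
    by (rule finite_subset[of _ "{..<i}"]) auto
  ultimately show ?thesis by (simp add: card_mono)
qed

lemma ascent_snoc:
  assumes "ascent_seq (x@[v])" "x \<noteq> []"
  shows "ascent_seq x \<and> v \<le> 1 + asc x"
proof -
  have "x ! 0 = 0" using assms by (auto simp: ascent_seq_def nth_append)
  moreover have "x ! i \<le> 1 + asc (take i x)" if "0 < i" "i < length x" for i
    using assms(1) that unfolding ascent_seq_def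
    by (metis (no_types, lifting) append_take_drop_id length_append_singleton less_SucI nth_append take_append take_eq_Nil2 append_Nil2 diff_is_0_eq less_imp_le_nat)
  moreover have "v \<le> 1 + asc x"
    using assms unfolding ascent_seq_def
    by (metis length_append_singleton lessI length_greater_0_conv nth_append_length take_append take_all_iff order_refl append_Nil2 diff_self_eq_0 take_0)
  ultimately show ?thesis using assms(2) by (auto simp: ascent_seq_def)
qed

lemma avoids_snoc: "avoids (x@[v]) p \<Longrightarrow> avoids x p"
  unfolding avoids_def contains_def
  using subseq_rev_drop_many by fastforce

lemma contains_idx:
  assumes "length p = 4" "i<j" "j<k" "k<l" "l<length y" "red [y!i,y!j,y!k,y!l] = p"
  shows "contains y p"
  using contains4[OF assms(1)] assms by blast

lemma contains_snoc_idx: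
  assumes "length p = 4" "i<j" "j<k" "k<length x" "red [x!i,x!j,x!k,v] = p"
  shows "contains (x@[v]) p"
proof -
  have "red [(x@[v])!i,(x@[v])!j,(x@[v])!k,(x@[v])!length x] = p"
    using assms by (simp add: nth_append)
  then show ?thesis using contains_idx[OF assms(1-3), of "length x" "x@[v]"] assms(4) by simp
qed

lemma c0102s:
  assumes "i<j" "j<k" "k<length x" "x!i = x!k" "x!i < x!j" "x!j < v"
  shows "contains (x@[v]) [0,1,0,2]"
proof -
  have "red [x!i,x!j,x!k,v] = [0,1,0,2]" using assms by (subst red4_0102) auto
  then show ?thesis by (rule contains_snoc_idx[rotated -1]) (use assms in auto)
qed

lemma c0112s:
  assumes "i<j" "j<k" "k<length x" "x!i < x!j" "x!j = x!k" "x!k < v"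
  shows "contains (x@[v]) [0,1,1,2]"
proof -
  have "red [x!i,x!j,x!k,v] = [0,1,1,2]" using assms by (subst red4_0112) auto
  then show ?thesis by (rule contains_snoc_idx[rotated -1]) (use assms in auto)
qed

lemma c0120s:
  assumes "i<j" "j<k" "k<length x" "x!i = v" "x!i < x!j" "x!j < x!k"
  shows "contains (x@[v]) [0,1,2,0]"
proof -
  have "red [x!i,x!j,x!k,v] = [0,1,2,0]" using assms by (subst red4_0120) auto
  then show ?thesis by (rule contains_snoc_idx[rotated -1]) (use assms in auto)
qed

lemma c0121s:
  assumes "i<j" "j<k" "k<length x" "x!i < x!j" "x!j = v" "x!j < x!k"
  shows "contains (x@[v]) [0,1,2,1]"
proof -
  have "red [x!i,x!j,x!k,v] = [0,1,2,1]" using assms by (subst red4_0121) auto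
  then show ?thesis by (rule contains_snoc_idx[rotated -1]) (use assms in auto)
qed


lemma avoid_0102I:
  assumes "\<And>i j k l. i<j \<Longrightarrow> j<k \<Longrightarrow> k<l \<Longrightarrow> l<length x \<Longrightarrow> \<not>(x!i = x!k \<and> x!i < x!j \<and> x!j < x!l)"
  shows "avoids x [0,1,0,2]"
proof -
  have L: "length [0,1,0,2::nat] = 4" by simp
  show ?thesis unfolding avoids_def contains4[OF L] red4_0102 using assms by blast
qed

lemma avoid_0112I:
  assumes "\<And>i j k l. i<j \<Longrightarrow> j<k \<Longrightarrow> k<l \<Longrightarrow> l<length x \<Longrightarrow> \<not>(x!i < x!j \<and> x!j = x!k \<and> x!k < x!l)"
  shows "avoids x [0,1,1,2]"
proof -
  have L: "length [0,1,1,2::nat] = 4" by simp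
  show ?thesis unfolding avoids_def contains4[OF L] red4_0112 using assms by blast
qed

lemma avoid_0120I:
  assumes "\<And>i j k l. i<j \<Longrightarrow> j<k \<Longrightarrow> k<l \<Longrightarrow> l<length x \<Longrightarrow> \<not>(x!i = x!l \<and> x!i < x!j \<and> x!j < x!k)"
  shows "avoids x [0,1,2,0]"
proof -
  have L: "length [0,1,2,0::nat] = 4" by simp
  show ?thesis unfolding avoids_def contains4[OF L] red4_0120 using assms by blast
qed

lemma avoid_0121I:
  assumes "\<And>i j k l. i<j \<Longrightarrow> j<k \<Longrightarrow> k<l \<Longrightarrow> l<length x \<Longrightarrow> \<not>(x!i < x!j \<and> x!j = x!l \<and> x!j < x!k)"
  shows "avoids x [0,1,2,1]"
proof -
  have L: "length [0,1,2,1::nat] = 4" by simp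
  show ?thesis unfolding avoids_def contains4[OF L] red4_0121 using assms by blast
qed


definition Tr :: "nat \<Rightarrow> (nat \<times> nat \<times> nat) set" where
  "Tr n = {(a,b,c). 1 \<le> a \<and> a < b \<and> b < c \<and> c \<le> n}"
definition Bset :: "nat \<Rightarrow> nat list set" where
  "Bset n = {x. length x = n \<and> x!0 = 0 \<and> set x \<subseteq> {0,1}}"
definition Sset :: "nat list set \<Rightarrow> nat \<Rightarrow> nat list set" where
  "Sset P n = {x. length x = n \<and> ascent_seq x \<and> (\<forall>p\<in>P. avoids x p)}"

lemma card_set_red: "card (set (red s)) \<le> card (set s)"
  unfolding red_def by (simp add: card_image_le)

lemma contains_card: "contains x p \<Longrightarrow> card (set p) \<le> card (set x)"
proof -
  assume "contains x p"
  then obtain s where s: "subseq s x" "red s = p" unfolding contains_def by auto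
  have "set s \<subseteq> set x" using s(1) by (auto elim: list_emb_set)
  then have "card (set s) \<le> card (set x)" by (simp add: card_mono)
  then show ?thesis using card_set_red[of s] s(2) by simp
qed

lemma Bset_ok:
  assumes "x \<in> Bset n" "n \<ge> 1" "{0,1,2} \<subseteq> set p"
  shows "ascent_seq x" "avoids x p"
proof -
  have x: "length x = n" "x!0 = 0" "set x \<subseteq> {0,1}" using assms(1) by (auto simp: Bset_def)
  have "x ! i \<le> 1 + asc (take i x)" if "i < length x" for i
  proof -
    have "x ! i \<le> 1" using x(3) nth_mem[OF that] by auto
    then show ?thesis by linarith
  qed
  then show "ascent_seq x" using x assms(2) by (auto simp: ascent_seq_def)
  have "card (set x) \<le> 2" using x(3) card_mono[of "{0,1::nat}" "set x"] by simp
  moreover have "card (set p) \<ge> 3"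
    using card_mono[OF _ assms(3)] by simp
  ultimately show "avoids x p" using contains_card[of x p] by (auto simp: avoids_def)
qed


definition Tr2 :: "nat \<Rightarrow> (nat \<times> nat) set" where
  "Tr2 n = {(a,b). 1 \<le> a \<and> a < b \<and> b \<le> n}"

lemma finite_Tr2: "finite (Tr2 n)"
  by (rule finite_subset[of _ "{..n} \<times> {..n}"]) (auto simp: Tr2_def)

lemma finite_Tr: "finite (Tr n)"
  by (rule finite_subset[of _ "{..n} \<times> {..n} \<times> {..n}"]) (auto simp: Tr_def)

lemma card_Tr2: "card (Tr2 n) = n choose 2"
proof (induction n)
  case 0
  have "Tr2 0 = {}" by (auto simp: Tr2_def)
  then show ?case by simp
next
  case (Suc n)
  have eq: "Tr2 (Suc n) = Tr2 n \<union> (\<lambda>a. (a, Suc n)) ` {1..n}"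
    by (auto simp: Tr2_def)
  have "card (Tr2 (Suc n)) = card (Tr2 n) + card ((\<lambda>a. (a, Suc n)) ` {1..n})"
    unfolding eq by (rule card_Un_disjoint[OF finite_Tr2]) (auto simp: Tr2_def)
  also have "card ((\<lambda>a. (a, Suc n)) ` {1..n}) = n"
    by (subst card_image) (auto simp: inj_on_def)
  finally show ?case using Suc by (simp add: numeral_2_eq_2)
qed

lemma card_Tr: "card (Tr n) = n choose 3"
proof (induction n)
  case 0
  have "Tr 0 = {}" by (auto simp: Tr_def)
  then show ?case by simp
next
  case (Suc n)
  have eq: "Tr (Suc n) = Tr n \<union> (\<lambda>(a,b). (a, b, Suc n)) ` Tr2 n"
    by (auto simp: Tr_def Tr2_def image_def)
  have "card (Tr (Suc n)) = card (Tr n) + card ((\<lambda>(a,b). (a, b, Suc n)) ` Tr2 n)"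
    unfolding eq by (rule card_Un_disjoint[OF finite_Tr finite_imageI[OF finite_Tr2]]) (auto simp: Tr_def Tr2_def)
  also have "card ((\<lambda>(a,b). (a, b, Suc n)) ` Tr2 n) = card (Tr2 n)"
    by (rule card_image) (auto simp: inj_on_def)
  finally show ?case using Suc by (simp add: card_Tr2 numeral_3_eq_3 numeral_2_eq_2)
qed

lemma card_Bset: "card (Bset (Suc m)) = 2 ^ m"
proof -
  have "Bset (Suc m) = (\<lambda>xs. 0 # xs) ` {xs. set xs \<subseteq> {0,1} \<and> length xs = m}"
    by (auto simp: Bset_def image_def length_Suc_conv)
  moreover have "card ((\<lambda>xs. 0 # xs) ` {xs. set xs \<subseteq> {0::nat,1} \<and> length xs = m}) = 2 ^ m"
    by (subst card_image) (auto simp: inj_on_def card_lists_length_eq numeral_2_eq_2)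
  ultimately show ?thesis by (simp add: numeral_2_eq_2)
qed

lemma finite_Bset: "finite (Bset n)"
proof -
  have "Bset n \<subseteq> {xs. set xs \<subseteq> {0,1} \<and> length xs = n}" by (auto simp: Bset_def)
  then show ?thesis by (rule finite_subset) (simp add: finite_lists_length_eq)
qed


lemma Bset_vals: "x \<in> Bset n \<Longrightarrow> i < length x \<Longrightarrow> x ! i = 0 \<or> x ! i = 1"
  unfolding Bset_def using nth_mem by fastforce

lemma asc_pos_obtain:
  assumes "1 \<le> asc x"
  obtains j where "Suc j < length x" "x!j < x!Suc j"
proof -
  have "{j. Suc j < length x \<and> x!j < x!Suc j} \<noteq> {}"
    using assms unfolding asc_def by (metis card.empty not_one_le_zero)
  then show ?thesis using that by blast
qed

lemma Bstep12:
  assumes xB: "x \<in> Bset n" and n: "length x = n" and v: "2 \<le> v" "v \<le> 1 + asc x"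
    and av1: "avoids (x@[v]) [0,1,0,2]" and av2: "avoids (x@[v]) [0,1,1,2]"
  shows "v = 2 \<and> 2 \<le> n \<and> (\<forall>i<n-1. x!i = 0) \<and> x!(n-1) = 1"
proof -
  have x0: "x!0 = 0" using xB by (simp add: Bset_def)
  have "1 \<le> asc x" using v by linarith
  then obtain j where j: "Suc j < length x" "x!j < x!Suc j"
    by (rule asc_pos_obtain)
  have xq: "x!Suc j = 1" using j Bset_vals[OF xB, of "Suc j"] by auto
  have no_after: False if "Suc j < r" "r < n" for r
  proof (cases "x!r = 0")
    case True
    have "contains (x@[v]) [0,1,0,2]"
      by (rule c0102s[of 0 "Suc j" r]) (use that True x0 xq v n in auto)
    then show False using av1 by (simp add: avoids_def)
  next
    case False
    then have "x!r = 1" using Bset_vals[OF xB, of r] that n by auto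
    have "contains (x@[v]) [0,1,1,2]"
      by (rule c0112s[of 0 "Suc j" r]) (use that \<open>x!r = 1\<close> x0 xq v n in auto)
    then show False using av2 by (simp add: avoids_def)
  qed
  have q: "Suc j = n - 1"
  proof (rule ccontr)
    assume "Suc j \<noteq> n - 1"
    then show False using no_after[of "n-1"] j n by linarith
  qed
  have zeros: "\<forall>i<n-1. x!i = 0"
  proof (intro allI impI)
    fix i assume i: "i < n - 1"
    show "x!i = 0"
    proof (rule ccontr)
      assume "x!i \<noteq> 0"
      then have "x!i = 1" using Bset_vals[OF xB, of i] i n by auto
      then have "i \<noteq> 0" using x0 by (cases i) auto
      have "contains (x@[v]) [0,1,1,2]"
        by (rule c0112s[of 0 i "Suc j"]) (use i q \<open>x!i = 1\<close> \<open>i \<noteq> 0\<close> x0 xq v n j in auto)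
      then show False using av2 by (simp add: avoids_def)
    qed
  qed
  have "asc x \<le> card {n-2}"
  proof (rule asc_le)
    fix j' assume j': "Suc j' < length x" "x!j' < x!Suc j'"
    have "x!Suc j' \<noteq> 0" using j' by auto
    then have "\<not> Suc j' < n - 1" using zeros by auto
    then show "j' \<in> {n-2}" using j' n by auto
  qed simp
  then have "v = 2" using v by simp
  then show ?thesis using q zeros xq j n by auto
qed

lemma Bstep3:
  assumes xB: "x \<in> Bset n" and n: "length x = n" and v: "2 \<le> v" "v \<le> 1 + asc x"
    and av2: "avoids (x@[v]) [0,1,1,2]"
  shows "v = 2 \<and> (\<exists>q. 1 \<le> q \<and> q < n \<and> x!q = 1 \<and> (\<forall>i<n. i \<noteq> q \<longrightarrow> x!i = 0))"
proof -
  have x0: "x!0 = 0" using xB by (simp add: Bset_def)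
  have "1 \<le> asc x" using v by linarith
  then obtain j where j: "Suc j < length x" "x!j < x!Suc j"
    by (rule asc_pos_obtain)
  have xq: "x!Suc j = 1" using j Bset_vals[OF xB, of "Suc j"] by auto
  have two: False if "i < r" "r < n" "x!i = 1" "x!r = 1" for i r
  proof -
    have "i \<noteq> 0" using that(3) x0 by (cases i) auto
    have "contains (x@[v]) [0,1,1,2]"
      by (rule c0112s[of 0 i r]) (use that \<open>i \<noteq> 0\<close> x0 v n in auto)
    then show False using av2 by (simp add: avoids_def)
  qed
  have zeros: "\<forall>i<n. i \<noteq> Suc j \<longrightarrow> x!i = 0"
  proof (intro allI impI)
    fix i assume i: "i < n" "i \<noteq> Suc j"
    show "x!i = 0"
    proof (rule ccontr)
      assume "x!i \<noteq> 0"
      then have "x!i = 1" using Bset_vals[OF xB, of i] i n by auto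
      show False
      proof (cases "i < Suc j")
        case True then show ?thesis using two[of i "Suc j"] \<open>x!i = 1\<close> xq j n by auto
      next
        case False then show ?thesis using two[of "Suc j" i] \<open>x!i = 1\<close> xq i by auto
      qed
    qed
  qed
  have "asc x \<le> card {j}"
  proof (rule asc_le)
    fix j' assume j': "Suc j' < length x" "x!j' < x!Suc j'"
    have "x!Suc j' \<noteq> 0" using j' by auto
    then have "Suc j' = Suc j" using zeros j' n by auto
    then show "j' \<in> {j}" by auto
  qed simp
  then have "v = 2" using v by simp
  then show ?thesis using zeros xq j n by (intro conjI exI[of _ "Suc j"]) auto
qed


lemma count_gen:
  assumes n: "1 \<le> n" and S: "S = Bset n \<union> g ` Tr n" and inj: "inj_on g (Tr n)"
    and dis: "\<And>t. t \<in> Tr n \<Longrightarrow> g t \<notin> Bset n"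
  shows "card S = 2^(n-1) + (n choose 3)"
proof -
  have "card S = card (Bset n) + card (g ` Tr n)"
    unfolding S by (rule card_Un_disjoint) (use finite_Bset finite_Tr dis in auto)
  also have "card (g ` Tr n) = n choose 3" using card_image[OF inj] card_Tr by simp
  also have "card (Bset n) = 2^(n-1)" using card_Bset[of "n-1"] n by simp
  finally show ?thesis .
qed

lemma a_count_Sset: "a_count P n = card (Sset P n)"
  by (simp add: a_count_def Sset_def)

lemma Bset_snoc01: "x \<in> Bset n \<Longrightarrow> x \<noteq> [] \<Longrightarrow> v \<le> 1 \<Longrightarrow> x@[v] \<in> Bset (Suc n)"
  by (auto simp: Bset_def nth_append)

lemma single_ascent: "ascent_seq [v] \<Longrightarrow> [v] \<in> Bset 1"
  by (auto simp: ascent_seq_def Bset_def)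


definition f1 :: "nat \<Rightarrow> nat \<Rightarrow> nat \<Rightarrow> nat \<Rightarrow> nat" where
  "f1 a b c i = (if i < a then 0 else if i \<le> b then i - a + 1 else if i < c then b - a + 1 else b - a)"

lemma map_upt_snoc: "map f [0..<Suc n] = map f [0..<n] @ [f n]"
  by simp

lemma f1_asc:
  assumes "(a,b,c) \<in> Tr n"
  shows "asc (map (f1 a b c) [0..<n]) \<le> b - a + 1"
proof -
  have "asc (map (f1 a b c) [0..<n]) \<le> card {a-1..<b}"
  proof (rule asc_le)
    fix j assume "Suc j < length (map (f1 a b c) [0..<n])"
      "map (f1 a b c) [0..<n] ! j < map (f1 a b c) [0..<n] ! Suc j"
    then show "j \<in> {a-1..<b}" using assms
      by (auto simp: Tr_def f1_def split: if_splits)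
  qed simp
  then show ?thesis using assms by (simp add: Tr_def)
qed

lemma f1_ascent:
  assumes "(a,b,c) \<in> Tr n"
  shows "ascent_seq (map (f1 a b c) [0..<n])"
proof -
  let ?x = "map (f1 a b c) [0..<n]"
  have tr: "1 \<le> a" "a < b" "b < c" "c \<le> n" using assms by (auto simp: Tr_def)
  have "?x ! i \<le> 1 + asc (take i ?x)" if i: "0 < i" "i < n" for i
  proof -
    consider "i < a" | "a \<le> i" "i \<le> b" | "b < i" by linarith
    then show ?thesis
    proof cases
      case 1 then show ?thesis using i by (simp add: f1_def)
    next
      case 2
      have "card {a-1..<i-1} \<le> asc (take i ?x)"
        by (rule asc_take_ge) (use i 2 tr in \<open>auto simp: f1_def\<close>)
      then show ?thesis using i 2 tr by (simp add: f1_def)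
    next
      case 3
      have "card {a-1..<b} \<le> asc (take i ?x)"
        by (rule asc_take_ge) (use i 3 tr in \<open>auto simp: f1_def\<close>)
      moreover have "f1 a b c i \<le> b - a + 1" using 3 by (simp add: f1_def)
      moreover have "card {a-1..<b} = b - a + 1" using tr by simp
      ultimately show ?thesis using i by simp
    qed
  qed
  then show ?thesis using tr by (auto simp: ascent_seq_def f1_def)
qed

lemma f1_avoid:
  assumes "(a,b,c) \<in> Tr n"
  shows "avoids (map (f1 a b c) [0..<n]) [0,1,0,2]" "avoids (map (f1 a b c) [0..<n]) [0,1,1,2]"
    "avoids (map (f1 a b c) [0..<n]) [0,1,2,0]"
proof -
  have ab: "a < b" using assms by (simp add: Tr_def)
  show "avoids (map (f1 a b c) [0..<n]) [0,1,0,2]"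
    by (rule avoid_0102I) (use ab in \<open>simp add: f1_def split: if_splits\<close>)
  show "avoids (map (f1 a b c) [0..<n]) [0,1,1,2]"
    by (rule avoid_0112I) (use ab in \<open>simp add: f1_def split: if_splits\<close>)
  show "avoids (map (f1 a b c) [0..<n]) [0,1,2,0]"
    by (rule avoid_0120I) (use ab in \<open>simp add: f1_def split: if_splits\<close>)
qed


lemma step1:
  assumes tr: "(a,b,c) \<in> Tr n" and x: "x = map (f1 a b c) [0..<n]" and v: "v \<le> 1 + asc x"
    and av: "avoids (x@[v]) [0,1,0,2]" "avoids (x@[v]) [0,1,1,2]" "avoids (x@[v]) [0,1,2,0]"
  shows "\<exists>a' b' c'. (a',b',c') \<in> Tr (Suc n) \<and> x@[v] = map (f1 a' b' c') [0..<Suc n]"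
proof -
  have t: "1 \<le> a" "a < b" "b < c" "c \<le> n" using tr by (auto simp: Tr_def)
  have lx: "length x = n" using x by simp
  have xi: "x!i = f1 a b c i" if "i < n" for i using that x by simp
  have vK: "v \<le> b - a + 2" using v f1_asc[OF tr] x by simp
  consider "v + 2 \<le> b - a + 1" | "v = b - a" | "v = b - a + 1" | "v = b - a + 2" using vK by linarith
  then show ?thesis
  proof cases
    case 1
    have "contains (x@[v]) [0,1,2,0]"
      by (rule c0120s[of "a+v-1" "a+v" "a+v+1"]) (use 1 t in \<open>auto simp: xi lx f1_def\<close>)
    then show ?thesis using av(3) by (simp add: avoids_def)
  next
    case 2
    have "x@[v] = map (f1 a b c) [0..<Suc n]" using 2 t by (simp add: x f1_def)
    moreover have "(a,b,c) \<in> Tr (Suc n)" using t by (simp add: Tr_def)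
    ultimately show ?thesis by blast
  next
    case 3
    show ?thesis
    proof (cases "c = n")
      case True
      have "map (f1 a b c) [0..<n] = map (f1 a b (Suc n)) [0..<n]"
        by (rule map_cong) (use True in \<open>auto simp: f1_def\<close>)
      then have "x@[v] = map (f1 a b (Suc n)) [0..<Suc n]" using 3 t True by (simp add: x f1_def)
      moreover have "(a,b,Suc n) \<in> Tr (Suc n)" using t by (simp add: Tr_def)
      ultimately show ?thesis by blast
    next
      case False
      have "contains (x@[v]) [0,1,1,2]"
        by (rule c0112s[of "b-2" "b-1" c]) (use 3 t False in \<open>auto simp: xi lx f1_def\<close>)
      then show ?thesis using av(2) by (simp add: avoids_def)
    qed
  next
    case 4
    show ?thesis
    proof (cases "b = n - 1 \<and> c = n")
      case True
      have "map (f1 a b c) [0..<n] = map (f1 a n (Suc n)) [0..<n]"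
        by (rule map_cong) (use True in \<open>auto simp: f1_def\<close>)
      moreover have "f1 a n (Suc n) n = v" using 4 t True by (simp add: f1_def; arith)
      ultimately have "x@[v] = map (f1 a n (Suc n)) [0..<Suc n]" by (simp add: x)
      moreover have "(a,n,Suc n) \<in> Tr (Suc n)" using t by (simp add: Tr_def)
      ultimately show ?thesis by blast
    next
      case False
      show ?thesis
      proof (cases "c < n")
        case True
        have "contains (x@[v]) [0,1,0,2]"
          by (rule c0102s[of "b-1" b c]) (use 4 t True in \<open>auto simp: xi lx f1_def\<close>)
        then show ?thesis using av(1) by (simp add: avoids_def)
      next
        case c: False
        have "contains (x@[v]) [0,1,1,2]"
          by (rule c0112s[of "b-1" b "b+1"]) (use 4 t c False in \<open>auto simp: xi lx f1_def\<close>)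
        then show ?thesis using av(2) by (simp add: avoids_def)
      qed
    qed
  qed
qed



lemma fwd1:
  "x \<noteq> [] \<Longrightarrow> ascent_seq x \<Longrightarrow> avoids x [0,1,0,2] \<Longrightarrow> avoids x [0,1,1,2] \<Longrightarrow> avoids x [0,1,2,0]
   \<Longrightarrow> x \<in> Bset (length x) \<or> (\<exists>a b c. (a,b,c) \<in> Tr (length x) \<and> x = map (f1 a b c) [0..<length x])"
proof (induction x rule: rev_induct)
  case Nil
  then show ?case by simp
next
  case (snoc v x)
  show ?case
  proof (cases "x = []")
    case True
    have "v = 0" using snoc.prems(2) True by (simp add: ascent_seq_def)
    then have "x@[v] \<in> Bset 1" using True by (simp add: Bset_def)
    then show ?thesis using True by simp
  next
    case False
    have asx: "ascent_seq x" "v \<le> 1 + asc x" using ascent_snoc[OF snoc.prems(2) False] by auto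
    have avx: "avoids x [0,1,0,2]" "avoids x [0,1,1,2]" "avoids x [0,1,2,0]"
      using snoc.prems(3-5) avoids_snoc by blast+
    note IH = snoc.IH[OF False asx(1) avx]
    define n where "n = length x"
    have len: "length (x@[v]) = Suc n" by (simp add: n_def)
    show ?thesis
    proof (cases "x \<in> Bset n")
      case True
      show ?thesis
      proof (cases "v \<le> 1")
        case True
        have "x@[v] \<in> Bset (Suc n)" by (rule Bset_snoc01[OF \<open>x \<in> Bset n\<close> False True])
        then show ?thesis unfolding len by blast
      next
        case v2: False
        have v2': "2 \<le> v" using v2 by linarith
        have st: "v = 2 \<and> 2 \<le> n \<and> (\<forall>i<n-1. x!i = 0) \<and> x!(n-1) = 1"
          by (rule Bstep12[OF True n_def[symmetric] v2' asx(2) snoc.prems(3) snoc.prems(4)])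
        from st have v2: "v = 2" and n2: "2 \<le> n" and z: "\<forall>i<n-1. x!i = 0" and o: "x!(n-1) = 1"
          by auto
        have "x@[v] = map (f1 (n-1) n (Suc n)) [0..<Suc n]"
        proof (rule nth_equalityI)
          fix i assume "i < length (x@[v])"
          then have "i < Suc n" using n_def by simp
          then consider "i < n - 1" | "i = n - 1" | "i = n" by linarith
          then show "(x@[v])!i = map (f1 (n-1) n (Suc n)) [0..<Suc n] ! i"
          proof cases
            case 1
            then have "i < n" by linarith
            then show ?thesis using 1 st n_def by (simp add: nth_append f1_def)
          next
            case 2
            then have "i < n" using n2 by linarith
            then show ?thesis using 2 o n_def by (simp add: nth_append f1_def)
          next
            case 3 then show ?thesis using v2 n2 n_def by (simp add: nth_append f1_def)
          qed
        qed (simp add: n_def)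
        moreover have "(n-1, n, Suc n) \<in> Tr (Suc n)" using st by (auto simp: Tr_def)
        ultimately show ?thesis unfolding len by blast
      qed
    next
      case False
      from IH False n_def obtain a b c where abc: "(a,b,c) \<in> Tr n" "x = map (f1 a b c) [0..<n]"
        by blast
      have "\<exists>a' b' c'. (a',b',c') \<in> Tr (Suc n) \<and> x@[v] = map (f1 a' b' c') [0..<Suc n]"
        by (rule step1[OF abc asx(2) snoc.prems(3-5)])
      then show ?thesis unfolding len by blast
    qed
  qed
qed

lemma f1_inj:
  assumes t: "(a,b,c) \<in> Tr n" and t': "(a',b',c') \<in> Tr n"
    and eq: "map (f1 a b c) [0..<n] = map (f1 a' b' c') [0..<n]"
  shows "(a,b,c) = (a',b',c')"
proof -
  have H: "i < n \<longrightarrow> f1 a b c i = f1 a' b' c' i" for i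
  proof
    assume "i < n"
    then show "f1 a b c i = f1 a' b' c' i" using arg_cong[OF eq, of "\<lambda>l. l!i"] by simp
  qed
  have ab: "1 \<le> a" "a < b" "b < c" "c \<le> n" "1 \<le> a'" "a' < b'" "b' < c'" "c' \<le> n"
    using t t' by (auto simp: Tr_def)
  have 1: "a = a'"
  proof (rule ccontr)
    assume "a \<noteq> a'"
    then consider "a < a'" | "a' < a" by linarith
    then show False
    proof cases
      case 1 then show False using H[of a] ab by (auto simp: f1_def split: if_splits)
    next
      case 2 then show False using H[of a'] ab by (auto simp: f1_def split: if_splits)
    qed
  qed
  have 2: "b = b'"
  proof (rule ccontr)
    assume "b \<noteq> b'"
    then consider "b < b'" | "b' < b" by linarith
    then show False
    proof cases
      case 1 then show False using H[of "Suc b"] ab \<open>a = a'\<close> by (auto simp: f1_def split: if_splits)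
    next
      case 2 then show False using H[of "Suc b'"] ab \<open>a = a'\<close> by (auto simp: f1_def split: if_splits)
    qed
  qed
  have 3: "c = c'"
  proof (rule ccontr)
    assume "c \<noteq> c'"
    then consider "c < c'" | "c' < c" by linarith
    then show False
    proof cases
      case 1 then show False using H[of c] ab \<open>a = a'\<close> \<open>b = b'\<close> by (auto simp: f1_def split: if_splits)
    next
      case 2 then show False using H[of c'] ab \<open>a = a'\<close> \<open>b = b'\<close> by (auto simp: f1_def split: if_splits)
    qed
  qed
  show ?thesis using 1 2 3 by simp
qed

lemma f1_notB: "(a,b,c) \<in> Tr n \<Longrightarrow> map (f1 a b c) [0..<n] \<notin> Bset n"
proof
  assume t: "(a,b,c) \<in> Tr n" and B: "map (f1 a b c) [0..<n] \<in> Bset n"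
  have "b < n" "a < b" using t by (auto simp: Tr_def)
  then have "map (f1 a b c) [0..<n] ! b \<ge> 2" by (simp add: f1_def)
  then show False using Bset_vals[OF B, of b] \<open>b < n\<close> by auto
qed

theorem count1:
  assumes "1 \<le> n"
  shows "a_count {[0,1,0,2], [0,1,1,2], [0,1,2,0]} n = 2 ^ (n - 1) + (n choose 3)"
proof -
  define g where "g = (\<lambda>(a,b,c). map (f1 a b c) [0..<n])"
  have inj: "inj_on g (Tr n)"
    unfolding g_def by (auto simp: inj_on_def dest: f1_inj)
  have dis: "g t \<notin> Bset n" if "t \<in> Tr n" for t
    using that f1_notB unfolding g_def by (cases t) auto
  have S: "Sset {[0,1,0,2], [0,1,1,2], [0,1,2,0]} n = Bset n \<union> g ` Tr n"
  proof (intro equalityI subsetI)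
    fix x assume "x \<in> Sset {[0,1,0,2], [0,1,1,2], [0,1,2,0]} n"
    then have x: "length x = n" "ascent_seq x" "avoids x [0,1,0,2]" "avoids x [0,1,1,2]" "avoids x [0,1,2,0]"
      by (auto simp: Sset_def)
    then have "x \<noteq> []" using assms by auto
    from fwd1[OF this x(2-5)] x(1)
    show "x \<in> Bset n \<union> g ` Tr n" unfolding g_def by (auto simp: image_def)
  next
    fix x assume "x \<in> Bset n \<union> g ` Tr n"
    then show "x \<in> Sset {[0,1,0,2], [0,1,1,2], [0,1,2,0]} n"
    proof
      assume B: "x \<in> Bset n"
      have "ascent_seq x" using Bset_ok(1)[OF B assms, of "[0,1,0,2]"] by auto
      moreover have "avoids x [0,1,0,2]" "avoids x [0,1,1,2]" "avoids x [0,1,2,0]"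
        using Bset_ok(2)[OF B assms] by auto
      ultimately show ?thesis using B by (auto simp: Sset_def Bset_def)
    next
      assume "x \<in> g ` Tr n"
      then obtain a b c where t: "(a,b,c) \<in> Tr n" "x = map (f1 a b c) [0..<n]"
        unfolding g_def by auto
      then show ?thesis using f1_ascent[OF t(1)] f1_avoid[OF t(1)] by (auto simp: Sset_def)
    qed
  qed
  show ?thesis unfolding a_count_Sset by (rule count_gen[OF assms S inj dis])
qed


definition f2 :: "nat \<Rightarrow> nat \<Rightarrow> nat \<Rightarrow> nat \<Rightarrow> nat" where
  "f2 a b c i = (if i < a then 0 else if i \<le> b then i - a + 1 else if i < c then b - a + 1 else 0)"


lemma f2_asc:
  assumes "(a,b,c) \<in> Tr n"
  shows "asc (map (f2 a b c) [0..<n]) \<le> b - a + 1"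
proof -
  have "asc (map (f2 a b c) [0..<n]) \<le> card {a-1..<b}"
  proof (rule asc_le)
    fix j assume "Suc j < length (map (f2 a b c) [0..<n])"
      "map (f2 a b c) [0..<n] ! j < map (f2 a b c) [0..<n] ! Suc j"
    then show "j \<in> {a-1..<b}" using assms
      by (auto simp: Tr_def f2_def split: if_splits)
  qed simp
  then show ?thesis using assms by (simp add: Tr_def)
qed

lemma f2_ascent:
  assumes "(a,b,c) \<in> Tr n"
  shows "ascent_seq (map (f2 a b c) [0..<n])"
proof -
  let ?x = "map (f2 a b c) [0..<n]"
  have tr: "1 \<le> a" "a < b" "b < c" "c \<le> n" using assms by (auto simp: Tr_def)
  have "?x ! i \<le> 1 + asc (take i ?x)" if i: "0 < i" "i < n" for i
  proof -
    consider "i < a" | "a \<le> i" "i \<le> b" | "b < i" by linarith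
    then show ?thesis
    proof cases
      case 1 then show ?thesis using i by (simp add: f2_def)
    next
      case 2
      have "card {a-1..<i-1} \<le> asc (take i ?x)"
        by (rule asc_take_ge) (use i 2 tr in \<open>auto simp: f2_def\<close>)
      then show ?thesis using i 2 tr by (simp add: f2_def)
    next
      case 3
      have "card {a-1..<b} \<le> asc (take i ?x)"
        by (rule asc_take_ge) (use i 3 tr in \<open>auto simp: f2_def\<close>)
      moreover have "f2 a b c i \<le> b - a + 1" using 3 by (simp add: f2_def)
      moreover have "card {a-1..<b} = b - a + 1" using tr by simp
      ultimately show ?thesis using i by simp
    qed
  qed
  then show ?thesis using tr by (auto simp: ascent_seq_def f2_def)
qed

lemma f2_avoid:
  assumes "(a,b,c) \<in> Tr n"
  shows "avoids (map (f2 a b c) [0..<n]) [0,1,0,2]" "avoids (map (f2 a b c) [0..<n]) [0,1,1,2]"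
    "avoids (map (f2 a b c) [0..<n]) [0,1,2,1]"
proof -
  have ab: "a < b" using assms by (simp add: Tr_def)
  show "avoids (map (f2 a b c) [0..<n]) [0,1,0,2]"
    by (rule avoid_0102I) (use ab in \<open>simp add: f2_def split: if_splits\<close>)
  show "avoids (map (f2 a b c) [0..<n]) [0,1,1,2]"
    by (rule avoid_0112I) (use ab in \<open>simp add: f2_def split: if_splits\<close>)
  show "avoids (map (f2 a b c) [0..<n]) [0,1,2,1]"
    by (rule avoid_0121I) (use ab in \<open>simp add: f2_def split: if_splits\<close>)
qed


lemma step2:
  assumes tr: "(a,b,c) \<in> Tr n" and x: "x = map (f2 a b c) [0..<n]" and v: "v \<le> 1 + asc x"
    and av: "avoids (x@[v]) [0,1,0,2]" "avoids (x@[v]) [0,1,1,2]" "avoids (x@[v]) [0,1,2,1]"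
  shows "\<exists>a' b' c'. (a',b',c') \<in> Tr (Suc n) \<and> x@[v] = map (f2 a' b' c') [0..<Suc n]"
proof -
  have t: "1 \<le> a" "a < b" "b < c" "c \<le> n" using tr by (auto simp: Tr_def)
  have lx: "length x = n" using x by simp
  have xi: "x!i = f2 a b c i" if "i < n" for i using that x by simp
  have vK: "v \<le> b - a + 2" using v f2_asc[OF tr] x by simp
  consider "v = 0" | "1 \<le> v" "v \<le> b - a" | "v = b - a + 1" | "v = b - a + 2" using vK by linarith
  then show ?thesis
  proof cases
    case 1
    have "x@[v] = map (f2 a b c) [0..<Suc n]" using 1 t by (simp add: x f2_def)
    moreover have "(a,b,c) \<in> Tr (Suc n)" using t by (simp add: Tr_def)
    ultimately show ?thesis by blast
  next
    case 2
    have "contains (x@[v]) [0,1,2,1]"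
      by (rule c0121s[of 0 "a+v-1" "a+v"]) (use 2 t in \<open>auto simp: xi lx f2_def\<close>)
    then show ?thesis using av(3) by (simp add: avoids_def)
  next
    case 3
    show ?thesis
    proof (cases "c = n")
      case True
      have "map (f2 a b c) [0..<n] = map (f2 a b (Suc n)) [0..<n]"
        by (rule map_cong) (use True in \<open>auto simp: f2_def\<close>)
      then have "x@[v] = map (f2 a b (Suc n)) [0..<Suc n]" using 3 t True by (simp add: x f2_def)
      moreover have "(a,b,Suc n) \<in> Tr (Suc n)" using t by (simp add: Tr_def)
      ultimately show ?thesis by blast
    next
      case False
      have "contains (x@[v]) [0,1,0,2]"
        by (rule c0102s[of 0 a c]) (use 3 t False in \<open>auto simp: xi lx f2_def\<close>)
      then show ?thesis using av(1) by (simp add: avoids_def)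
    qed
  next
    case 4
    show ?thesis
    proof (cases "b = n - 1 \<and> c = n")
      case True
      have "map (f2 a b c) [0..<n] = map (f2 a n (Suc n)) [0..<n]"
        by (rule map_cong) (use True in \<open>auto simp: f2_def\<close>)
      moreover have "f2 a n (Suc n) n = v" using 4 t True by (simp add: f2_def; arith)
      ultimately have "x@[v] = map (f2 a n (Suc n)) [0..<Suc n]" by (simp add: x)
      moreover have "(a,n,Suc n) \<in> Tr (Suc n)" using t by (simp add: Tr_def)
      ultimately show ?thesis by blast
    next
      case False
      show ?thesis
      proof (cases "c < n")
        case True
        have "contains (x@[v]) [0,1,0,2]"
          by (rule c0102s[of 0 a c]) (use 4 t True in \<open>auto simp: xi lx f2_def\<close>)
        then show ?thesis using av(1) by (simp add: avoids_def)
      next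
        case c: False
        have "contains (x@[v]) [0,1,1,2]"
          by (rule c0112s[of "b-1" b "b+1"]) (use 4 t c False in \<open>auto simp: xi lx f2_def\<close>)
        then show ?thesis using av(2) by (simp add: avoids_def)
      qed
    qed
  qed
qed

lemma fwd2:
  "x \<noteq> [] \<Longrightarrow> ascent_seq x \<Longrightarrow> avoids x [0,1,0,2] \<Longrightarrow> avoids x [0,1,1,2] \<Longrightarrow> avoids x [0,1,2,1]
   \<Longrightarrow> x \<in> Bset (length x) \<or> (\<exists>a b c. (a,b,c) \<in> Tr (length x) \<and> x = map (f2 a b c) [0..<length x])"
proof (induction x rule: rev_induct)
  case Nil
  then show ?case by simp
next
  case (snoc v x)
  show ?case
  proof (cases "x = []")
    case True
    have "v = 0" using snoc.prems(2) True by (simp add: ascent_seq_def)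
    then have "x@[v] \<in> Bset 1" using True by (simp add: Bset_def)
    then show ?thesis using True by simp
  next
    case False
    have asx: "ascent_seq x" "v \<le> 1 + asc x" using ascent_snoc[OF snoc.prems(2) False] by auto
    have avx: "avoids x [0,1,0,2]" "avoids x [0,1,1,2]" "avoids x [0,1,2,1]"
      using snoc.prems(3-5) avoids_snoc by blast+
    note IH = snoc.IH[OF False asx(1) avx]
    define n where "n = length x"
    have len: "length (x@[v]) = Suc n" by (simp add: n_def)
    show ?thesis
    proof (cases "x \<in> Bset n")
      case True
      show ?thesis
      proof (cases "v \<le> 1")
        case True
        have "x@[v] \<in> Bset (Suc n)" by (rule Bset_snoc01[OF \<open>x \<in> Bset n\<close> False True])
        then show ?thesis unfolding len by blast
      next
        case v2: False
        have v2': "2 \<le> v" using v2 by linarith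
        have st: "v = 2 \<and> 2 \<le> n \<and> (\<forall>i<n-1. x!i = 0) \<and> x!(n-1) = 1"
          by (rule Bstep12[OF True n_def[symmetric] v2' asx(2) snoc.prems(3) snoc.prems(4)])
        from st have v2: "v = 2" and n2: "2 \<le> n" and z: "\<forall>i<n-1. x!i = 0" and o: "x!(n-1) = 1"
          by auto
        have "x@[v] = map (f2 (n-1) n (Suc n)) [0..<Suc n]"
        proof (rule nth_equalityI)
          fix i assume "i < length (x@[v])"
          then have "i < Suc n" using n_def by simp
          then consider "i < n - 1" | "i = n - 1" | "i = n" by linarith
          then show "(x@[v])!i = map (f2 (n-1) n (Suc n)) [0..<Suc n] ! i"
          proof cases
            case 1
            then have "i < n" by linarith
            then show ?thesis using 1 st n_def by (simp add: nth_append f2_def)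
          next
            case 2
            then have "i < n" using n2 by linarith
            then show ?thesis using 2 o n_def by (simp add: nth_append f2_def)
          next
            case 3 then show ?thesis using v2 n2 n_def by (simp add: nth_append f2_def)
          qed
        qed (simp add: n_def)
        moreover have "(n-1, n, Suc n) \<in> Tr (Suc n)" using st by (auto simp: Tr_def)
        ultimately show ?thesis unfolding len by blast
      qed
    next
      case False
      from IH False n_def obtain a b c where abc: "(a,b,c) \<in> Tr n" "x = map (f2 a b c) [0..<n]"
        by blast
      have "\<exists>a' b' c'. (a',b',c') \<in> Tr (Suc n) \<and> x@[v] = map (f2 a' b' c') [0..<Suc n]"
        by (rule step2[OF abc asx(2) snoc.prems(3-5)])
      then show ?thesis unfolding len by blast
    qed
  qed
qed

lemma f2_inj:
  assumes t: "(a,b,c) \<in> Tr n" and t': "(a',b',c') \<in> Tr n"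
    and eq: "map (f2 a b c) [0..<n] = map (f2 a' b' c') [0..<n]"
  shows "(a,b,c) = (a',b',c')"
proof -
  have H: "i < n \<longrightarrow> f2 a b c i = f2 a' b' c' i" for i
  proof
    assume "i < n"
    then show "f2 a b c i = f2 a' b' c' i" using arg_cong[OF eq, of "\<lambda>l. l!i"] by simp
  qed
  have ab: "1 \<le> a" "a < b" "b < c" "c \<le> n" "1 \<le> a'" "a' < b'" "b' < c'" "c' \<le> n"
    using t t' by (auto simp: Tr_def)
  have 1: "a = a'"
  proof (rule ccontr)
    assume "a \<noteq> a'"
    then consider "a < a'" | "a' < a" by linarith
    then show False
    proof cases
      case 1 then show False using H[of a] ab by (auto simp: f2_def split: if_splits)
    next
      case 2 then show False using H[of a'] ab by (auto simp: f2_def split: if_splits)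
    qed
  qed
  have 2: "b = b'"
  proof (rule ccontr)
    assume "b \<noteq> b'"
    then consider "b < b'" | "b' < b" by linarith
    then show False
    proof cases
      case 1 then show False using H[of "Suc b"] ab \<open>a = a'\<close> by (auto simp: f2_def split: if_splits)
    next
      case 2 then show False using H[of "Suc b'"] ab \<open>a = a'\<close> by (auto simp: f2_def split: if_splits)
    qed
  qed
  have 3: "c = c'"
  proof (rule ccontr)
    assume "c \<noteq> c'"
    then consider "c < c'" | "c' < c" by linarith
    then show False
    proof cases
      case 1 then show False using H[of c] ab \<open>a = a'\<close> \<open>b = b'\<close> by (auto simp: f2_def split: if_splits)
    next
      case 2 then show False using H[of c'] ab \<open>a = a'\<close> \<open>b = b'\<close> by (auto simp: f2_def split: if_splits)
    qed
  qed
  show ?thesis using 1 2 3 by simp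
qed

lemma f2_notB: "(a,b,c) \<in> Tr n \<Longrightarrow> map (f2 a b c) [0..<n] \<notin> Bset n"
proof
  assume t: "(a,b,c) \<in> Tr n" and B: "map (f2 a b c) [0..<n] \<in> Bset n"
  have "b < n" "a < b" using t by (auto simp: Tr_def)
  then have "map (f2 a b c) [0..<n] ! b \<ge> 2" by (simp add: f2_def)
  then show False using Bset_vals[OF B, of b] \<open>b < n\<close> by auto
qed

theorem count2:
  assumes "1 \<le> n"
  shows "a_count {[0,1,0,2], [0,1,1,2], [0,1,2,1]} n = 2 ^ (n - 1) + (n choose 3)"
proof -
  define g where "g = (\<lambda>(a,b,c). map (f2 a b c) [0..<n])"
  have inj: "inj_on g (Tr n)"
    unfolding g_def by (auto simp: inj_on_def dest: f2_inj)
  have dis: "g t \<notin> Bset n" if "t \<in> Tr n" for t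
    using that f2_notB unfolding g_def by (cases t) auto
  have S: "Sset {[0,1,0,2], [0,1,1,2], [0,1,2,1]} n = Bset n \<union> g ` Tr n"
  proof (intro equalityI subsetI)
    fix x assume "x \<in> Sset {[0,1,0,2], [0,1,1,2], [0,1,2,1]} n"
    then have x: "length x = n" "ascent_seq x" "avoids x [0,1,0,2]" "avoids x [0,1,1,2]" "avoids x [0,1,2,1]"
      by (auto simp: Sset_def)
    then have "x \<noteq> []" using assms by auto
    from fwd2[OF this x(2-5)] x(1)
    show "x \<in> Bset n \<union> g ` Tr n" unfolding g_def by (auto simp: image_def)
  next
    fix x assume "x \<in> Bset n \<union> g ` Tr n"
    then show "x \<in> Sset {[0,1,0,2], [0,1,1,2], [0,1,2,1]} n"
    proof
      assume B: "x \<in> Bset n"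
      have "ascent_seq x" using Bset_ok(1)[OF B assms, of "[0,1,0,2]"] by auto
      moreover have "avoids x [0,1,0,2]" "avoids x [0,1,1,2]" "avoids x [0,1,2,1]"
        using Bset_ok(2)[OF B assms] by auto
      ultimately show ?thesis using B by (auto simp: Sset_def Bset_def)
    next
      assume "x \<in> g ` Tr n"
      then obtain a b c where t: "(a,b,c) \<in> Tr n" "x = map (f2 a b c) [0..<n]"
        unfolding g_def by auto
      then show ?thesis using f2_ascent[OF t(1)] f2_avoid[OF t(1)] by (auto simp: Sset_def)
    qed
  qed
  show ?thesis unfolding a_count_Sset by (rule count_gen[OF assms S inj dis])
qed


definition f3 :: "nat \<Rightarrow> nat \<Rightarrow> nat \<Rightarrow> nat \<Rightarrow> nat" where
  "f3 a b c i = (if i < a then 0 else if i = a then 1 else if i < b then 0 else if i < c then i - b + 2 else c - b + 1)"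

lemma f3_asc:
  assumes "(a,b,c) \<in> Tr n"
  shows "asc (map (f3 a b c) [0..<n]) \<le> c - b + 1"
proof -
  have "asc (map (f3 a b c) [0..<n]) \<le> card (insert (a-1) {b-1..<c-1})"
  proof (rule asc_le)
    fix j assume "Suc j < length (map (f3 a b c) [0..<n])"
      "map (f3 a b c) [0..<n] ! j < map (f3 a b c) [0..<n] ! Suc j"
    then show "j \<in> insert (a-1) {b-1..<c-1}" using assms
      by (auto simp: Tr_def f3_def split: if_splits)
  qed simp
  also have "\<dots> \<le> Suc (card {b-1..<c-1})" by (simp add: card_insert_if)
  finally show ?thesis using assms by (simp add: Tr_def)
qed

lemma f3_ascent:
  assumes "(a,b,c) \<in> Tr n"
  shows "ascent_seq (map (f3 a b c) [0..<n])"
proof -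
  let ?x = "map (f3 a b c) [0..<n]"
  have tr: "1 \<le> a" "a < b" "b < c" "c \<le> n" using assms by (auto simp: Tr_def)
  have "?x ! i \<le> 1 + asc (take i ?x)" if i: "0 < i" "i < n" for i
  proof -
    consider "i < b" | "b \<le> i" "i < c" | "c \<le> i" by linarith
    then show ?thesis
    proof cases
      case 1 then show ?thesis using i by (simp add: f3_def)
    next
      case 2
      have "card (insert (a-1) {b-1..<i-1}) \<le> asc (take i ?x)"
        by (rule asc_take_ge) (use i 2 tr in \<open>auto simp: f3_def\<close>)
      moreover have "card (insert (a-1) {b-1..<i-1}) = i - b + 1" using tr 2 by simp
      moreover have "f3 a b c i = i - b + 2" using 2 tr by (simp add: f3_def)
      ultimately show ?thesis using i by simp
    next
      case 3
      have "card (insert (a-1) {b-1..<c-1}) \<le> asc (take i ?x)"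
        by (rule asc_take_ge) (use i 3 tr in \<open>auto simp: f3_def\<close>)
      moreover have "card (insert (a-1) {b-1..<c-1}) = c - b + 1" using tr by simp
      moreover have "f3 a b c i = c - b + 1" using 3 tr by (simp add: f3_def)
      ultimately show ?thesis using i by simp
    qed
  qed
  then show ?thesis using tr by (auto simp: ascent_seq_def f3_def)
qed

lemma f3_avoid:
  assumes "(a,b,c) \<in> Tr n"
  shows "avoids (map (f3 a b c) [0..<n]) [0,1,1,2]" "avoids (map (f3 a b c) [0..<n]) [0,1,2,0]"
    "avoids (map (f3 a b c) [0..<n]) [0,1,2,1]"
proof -
  have ab: "a < b" "b < c" using assms by (auto simp: Tr_def)
  show "avoids (map (f3 a b c) [0..<n]) [0,1,1,2]"
    by (rule avoid_0112I) (use ab in \<open>simp add: f3_def split: if_splits\<close>)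
  show "avoids (map (f3 a b c) [0..<n]) [0,1,2,0]"
    by (rule avoid_0120I) (use ab in \<open>simp add: f3_def split: if_splits\<close>)
  show "avoids (map (f3 a b c) [0..<n]) [0,1,2,1]"
    by (rule avoid_0121I) (use ab in \<open>simp add: f3_def split: if_splits; arith\<close>)
qed

lemma step3:
  assumes tr: "(a,b,c) \<in> Tr n" and x: "x = map (f3 a b c) [0..<n]" and v: "v \<le> 1 + asc x"
    and av: "avoids (x@[v]) [0,1,1,2]" "avoids (x@[v]) [0,1,2,0]" "avoids (x@[v]) [0,1,2,1]"
  shows "\<exists>a' b' c'. (a',b',c') \<in> Tr (Suc n) \<and> x@[v] = map (f3 a' b' c') [0..<Suc n]"
proof -
  have t: "1 \<le> a" "a < b" "b < c" "c \<le> n" using tr by (auto simp: Tr_def)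
  have lx: "length x = n" using x by simp
  have xi: "x!i = f3 a b c i" if "i < n" for i using that x by simp
  have vK: "v \<le> c - b + 2" using v f3_asc[OF tr] x by simp
  consider "v = 0" | "v = 1" | "2 \<le> v" "v \<le> c - b" | "v = c - b + 1" | "v = c - b + 2"
    using vK by linarith
  then show ?thesis
  proof cases
    case 1
    have "contains (x@[v]) [0,1,2,0]"
      by (rule c0120s[of 0 a b]) (use 1 t in \<open>auto simp: xi lx f3_def\<close>)
    then show ?thesis using av(2) by (simp add: avoids_def)
  next
    case 2
    have "contains (x@[v]) [0,1,2,1]"
      by (rule c0121s[of 0 a b]) (use 2 t in \<open>auto simp: xi lx f3_def\<close>)
    then show ?thesis using av(3) by (simp add: avoids_def)
  next
    case 3
    have "contains (x@[v]) [0,1,2,1]"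
      by (rule c0121s[of 0 "b+v-2" "b+v-1"]) (use 3 t in \<open>auto simp: xi lx f3_def\<close>)
    then show ?thesis using av(3) by (simp add: avoids_def)
  next
    case 4
    have "f3 a b c n = v" using 4 t by (simp add: f3_def)
    then have "x@[v] = map (f3 a b c) [0..<Suc n]" by (simp add: x)
    moreover have "(a,b,c) \<in> Tr (Suc n)" using t by (simp add: Tr_def)
    ultimately show ?thesis by blast
  next
    case 5
    show ?thesis
    proof (cases "c = n")
      case True
      have "map (f3 a b c) [0..<n] = map (f3 a b (Suc n)) [0..<n]"
        by (rule map_cong) (use True in \<open>auto simp: f3_def\<close>)
      moreover have "f3 a b (Suc n) n = v" using 5 t True by (simp add: f3_def; arith)
      ultimately have "x@[v] = map (f3 a b (Suc n)) [0..<Suc n]" by (simp add: x)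
      moreover have "(a,b,Suc n) \<in> Tr (Suc n)" using t by (simp add: Tr_def)
      ultimately show ?thesis by blast
    next
      case False
      have "contains (x@[v]) [0,1,1,2]"
        by (rule c0112s[of 0 "c-1" c]) (use 5 t False in \<open>auto simp: xi lx f3_def\<close>)
      then show ?thesis using av(1) by (simp add: avoids_def)
    qed
  qed
qed

lemma fwd3:
  "x \<noteq> [] \<Longrightarrow> ascent_seq x \<Longrightarrow> avoids x [0,1,1,2] \<Longrightarrow> avoids x [0,1,2,0] \<Longrightarrow> avoids x [0,1,2,1]
   \<Longrightarrow> x \<in> Bset (length x) \<or> (\<exists>a b c. (a,b,c) \<in> Tr (length x) \<and> x = map (f3 a b c) [0..<length x])"
proof (induction x rule: rev_induct)
  case Nil
  then show ?case by simp
next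
  case (snoc v x)
  show ?case
  proof (cases "x = []")
    case True
    have "v = 0" using snoc.prems(2) True by (simp add: ascent_seq_def)
    then have "x@[v] \<in> Bset 1" using True by (simp add: Bset_def)
    then show ?thesis using True by simp
  next
    case False
    have asx: "ascent_seq x" "v \<le> 1 + asc x" using ascent_snoc[OF snoc.prems(2) False] by auto
    have avx: "avoids x [0,1,1,2]" "avoids x [0,1,2,0]" "avoids x [0,1,2,1]"
      using snoc.prems(3-5) avoids_snoc by blast+
    note IH = snoc.IH[OF False asx(1) avx]
    define n where "n = length x"
    have len: "length (x@[v]) = Suc n" by (simp add: n_def)
    show ?thesis
    proof (cases "x \<in> Bset n")
      case True
      show ?thesis
      proof (cases "v \<le> 1")
        case True
        have "x@[v] \<in> Bset (Suc n)" by (rule Bset_snoc01[OF \<open>x \<in> Bset n\<close> False True])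
        then show ?thesis unfolding len by blast
      next
        case v2: False
        have v2': "2 \<le> v" using v2 by linarith
        have st: "v = 2 \<and> (\<exists>q. 1 \<le> q \<and> q < n \<and> x!q = 1 \<and> (\<forall>i<n. i \<noteq> q \<longrightarrow> x!i = 0))"
          by (rule Bstep3[OF True n_def[symmetric] v2' asx(2) snoc.prems(3)])
        then obtain q where v2: "v = 2" and q: "1 \<le> q" "q < n" "x!q = 1" "\<forall>i<n. i \<noteq> q \<longrightarrow> x!i = 0"
          by blast
        have "x@[v] = map (f3 q n (Suc n)) [0..<Suc n]"
        proof (rule nth_equalityI)
          fix i assume "i < length (x@[v])"
          then have "i < Suc n" using n_def by simp
          then consider "i < n" "i \<noteq> q" | "i = q" | "i = n" using q by linarith
          then show "(x@[v])!i = map (f3 q n (Suc n)) [0..<Suc n] ! i"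
          proof cases
            case 1
            then show ?thesis using q n_def by (simp add: nth_append f3_def)
          next
            case 2
            then show ?thesis using q n_def by (simp add: nth_append f3_def)
          next
            case 3 then show ?thesis using v2 q n_def by (simp add: nth_append f3_def)
          qed
        qed (simp add: n_def)
        moreover have "(q, n, Suc n) \<in> Tr (Suc n)" using q by (auto simp: Tr_def)
        ultimately show ?thesis unfolding len by blast
      qed
    next
      case False
      from IH False n_def obtain a b c where abc: "(a,b,c) \<in> Tr n" "x = map (f3 a b c) [0..<n]"
        by blast
      have "\<exists>a' b' c'. (a',b',c') \<in> Tr (Suc n) \<and> x@[v] = map (f3 a' b' c') [0..<Suc n]"
        by (rule step3[OF abc asx(2) snoc.prems(3-5)])
      then show ?thesis unfolding len by blast
    qed
  qed
qed

lemma f3_inj: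
  assumes t: "(a,b,c) \<in> Tr n" and t': "(a',b',c') \<in> Tr n"
    and eq: "map (f3 a b c) [0..<n] = map (f3 a' b' c') [0..<n]"
  shows "(a,b,c) = (a',b',c')"
proof -
  have H: "i < n \<longrightarrow> f3 a b c i = f3 a' b' c' i" for i
  proof
    assume "i < n"
    then show "f3 a b c i = f3 a' b' c' i" using arg_cong[OF eq, of "\<lambda>l. l!i"] by simp
  qed
  have ab: "1 \<le> a" "a < b" "b < c" "c \<le> n" "1 \<le> a'" "a' < b'" "b' < c'" "c' \<le> n"
    using t t' by (auto simp: Tr_def)
  have 1: "a = a'"
  proof (rule ccontr)
    assume "a \<noteq> a'"
    then consider "a < a'" | "a' < a" by linarith
    then show False
    proof cases
      case 1 then show False using H[of a] ab by (auto simp: f3_def split: if_splits)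
    next
      case 2 then show False using H[of a'] ab by (auto simp: f3_def split: if_splits)
    qed
  qed
  have 2: "b = b'"
  proof (rule ccontr)
    assume "b \<noteq> b'"
    then consider "b < b'" | "b' < b" by linarith
    then show False
    proof cases
      case 1 then show False using H[of b] ab \<open>a = a'\<close> by (auto simp: f3_def split: if_splits)
    next
      case 2 then show False using H[of b'] ab \<open>a = a'\<close> by (auto simp: f3_def split: if_splits)
    qed
  qed
  have 3: "c = c'"
  proof (rule ccontr)
    assume "c \<noteq> c'"
    then consider "c < c'" | "c' < c" by linarith
    then show False
    proof cases
      case 1 then show False using H[of c] ab \<open>a = a'\<close> \<open>b = b'\<close> by (auto simp: f3_def split: if_splits)
    next
      case 2 then show False using H[of c'] ab \<open>a = a'\<close> \<open>b = b'\<close> by (auto simp: f3_def split: if_splits)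
    qed
  qed
  show ?thesis using 1 2 3 by simp
qed

lemma f3_notB: "(a,b,c) \<in> Tr n \<Longrightarrow> map (f3 a b c) [0..<n] \<notin> Bset n"
proof
  assume t: "(a,b,c) \<in> Tr n" and B: "map (f3 a b c) [0..<n] \<in> Bset n"
  have "b < n" "a < b" "b < c" using t by (auto simp: Tr_def)
  then have "map (f3 a b c) [0..<n] ! b \<ge> 2" by (simp add: f3_def)
  then show False using Bset_vals[OF B, of b] \<open>b < n\<close> by auto
qed

theorem count3:
  assumes "1 \<le> n"
  shows "a_count {[0,1,1,2], [0,1,2,0], [0,1,2,1]} n = 2 ^ (n - 1) + (n choose 3)"
proof -
  define g where "g = (\<lambda>(a,b,c). map (f3 a b c) [0..<n])"
  have inj: "inj_on g (Tr n)"
    unfolding g_def by (auto simp: inj_on_def dest: f3_inj)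
  have dis: "g t \<notin> Bset n" if "t \<in> Tr n" for t
    using that f3_notB unfolding g_def by (cases t) auto
  have S: "Sset {[0,1,1,2], [0,1,2,0], [0,1,2,1]} n = Bset n \<union> g ` Tr n"
  proof (intro equalityI subsetI)
    fix x assume "x \<in> Sset {[0,1,1,2], [0,1,2,0], [0,1,2,1]} n"
    then have x: "length x = n" "ascent_seq x" "avoids x [0,1,1,2]" "avoids x [0,1,2,0]" "avoids x [0,1,2,1]"
      by (auto simp: Sset_def)
    then have "x \<noteq> []" using assms by auto
    from fwd3[OF this x(2-5)] x(1)
    show "x \<in> Bset n \<union> g ` Tr n" unfolding g_def by (auto simp: image_def)
  next
    fix x assume "x \<in> Bset n \<union> g ` Tr n"
    then show "x \<in> Sset {[0,1,1,2], [0,1,2,0], [0,1,2,1]} n"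
    proof
      assume B: "x \<in> Bset n"
      have "ascent_seq x" using Bset_ok(1)[OF B assms, of "[0,1,0,2]"] by auto
      moreover have "avoids x [0,1,1,2]" "avoids x [0,1,2,0]" "avoids x [0,1,2,1]"
        using Bset_ok(2)[OF B assms] by auto
      ultimately show ?thesis using B by (auto simp: Sset_def Bset_def)
    next
      assume "x \<in> g ` Tr n"
      then obtain a b c where t: "(a,b,c) \<in> Tr n" "x = map (f3 a b c) [0..<n]"
        unfolding g_def by auto
      then show ?thesis using f3_ascent[OF t(1)] f3_avoid[OF t(1)] by (auto simp: Sset_def)
    qed
  qed
  show ?thesis unfolding a_count_Sset by (rule count_gen[OF assms S inj dis])
qed


theorem theorem4p2:
  fixes n :: nat
  assumes "n \<ge> 1"
  shows "a_count {[0,1,0,2], [0,1,1,2], [0,1,2,0]} n = 2 ^ (n - 1) + (n choose 3)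
       \<and> a_count {[0,1,0,2], [0,1,1,2], [0,1,2,1]} n = 2 ^ (n - 1) + (n choose 3)
       \<and> a_count {[0,1,1,2], [0,1,2,0], [0,1,2,1]} n = 2 ^ (n - 1) + (n choose 3)"
  using count1[OF assms] count2[OF assms] count3[OF assms] by blast

end
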